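(* Let $(\Omega,\mathcal{F},\mathbb{P})$ be a nonatomic probability space and $(\Phi,\Psi)$ an Orlicz pair as in the context. Let $X\in L^\Phi$. Then the net $(\mathbb{E}[X|\pi])_{\pi\in\Pi}$ order converges to $X$ in $L^\Phi$ if and only if $X\in L^\infty$.
   Context: $(\Omega,\mathcal{F},\mathbb{P})$ is a nonatomic probability space. An Orlicz function is a convex, increasing $\Phi:[0,\infty)\to[0,\infty)$ with $\Phi(0)=0$; its conjugate is $\Psi(s)=\sup_{t\ge0}(ts-\Phi(t))$. Standing assumption: $\Phi(t)>0$ for $t>0$ and $\lim_{t\to\infty}\Phi(t)/t=\infty$. $L^\Phi$ is the space (a Banach lattice under the a.s. order) of random variables $X$ (mod a.s. equality) with $\|X\|_\Phi:=\inf\{\lambda>0:\mathbb{E}[\Phi(|X|/\lambda)]\le 1\}<\infty$. $\Pi$ denotes the set of all finite measurable partitions of $\Omega$ whose members all have nonzero probability, directed by refinement; $\mathbb{E}[X|\pi]:=\mathbb{E}[X|\sigma(\pi)]$. A net $(X_\alpha)$ in $L^\Phi$ order converges to $X\in L^\Phi$ if there is a net $(Y_\alpha)$ in $L^\Phi$ (same index set) which is decreasing with infimum $0$ in $L^\Phi$ and satisfies $|X_\alpha-X|\le Y_\alpha$ for all $\alpha$. *)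

theory Defs
  imports "HOL-Probability.Probability"
begin

definition nonatomic :: "'a measure \<Rightarrow> bool" where
  "nonatomic M \<longleftrightarrow> (\<forall>A\<in>sets M. measure M A > 0 \<longrightarrow>
      (\<exists>B\<in>sets M. B \<subseteq> A \<and> 0 < measure M B \<and> measure M B < measure M A))"

definition orlicz_fun :: "(real \<Rightarrow> real) \<Rightarrow> bool" where
  "orlicz_fun \<Phi> \<longleftrightarrow> convex_on {0..} \<Phi> \<and> mono_on {0..} \<Phi> \<and> \<Phi> 0 = 0
     \<and> (\<forall>t\<ge>0. 0 \<le> \<Phi> t)
     \<and> (\<forall>t>0. 0 < \<Phi> t)
     \<and> filterlim (\<lambda>t. \<Phi> t / t) at_top at_top"

text \<open>The Orlicz space: measurable X with Luxemburg norm finite, i.e. some lambda>0 with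
  E[Phi(|X|/lambda)] \<le> 1.\<close>
definition LPhi :: "'a measure \<Rightarrow> (real \<Rightarrow> real) \<Rightarrow> ('a \<Rightarrow> real) set" where
  "LPhi M \<Phi> = {X \<in> borel_measurable M.
      \<exists>l>0. (\<integral>\<^sup>+ \<omega>. ennreal (\<Phi> (\<bar>X \<omega>\<bar> / l)) \<partial>M) \<le> 1}"

definition Linf :: "'a measure \<Rightarrow> ('a \<Rightarrow> real) set" where
  "Linf M = {X \<in> borel_measurable M. \<exists>C. AE \<omega> in M. \<bar>X \<omega>\<bar> \<le> C}"

definition partitions :: "'a measure \<Rightarrow> 'a set set set" where
  "partitions M = {P. finite P \<and> P \<subseteq> sets M \<and> (\<forall>A\<in>P. measure M A > 0)
      \<and> disjoint P \<and> \<Union>P = space M}"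

text \<open>part_refines P Q: Q is a refinement of P (Q comes later in the directed order).\<close>
definition part_refines :: "'a set set \<Rightarrow> 'a set set \<Rightarrow> bool" where
  "part_refines P Q \<longleftrightarrow> (\<forall>B\<in>Q. \<exists>A\<in>P. B \<subseteq> A)"

definition cond_exp_part :: "'a measure \<Rightarrow> 'a set set \<Rightarrow> ('a \<Rightarrow> real) \<Rightarrow> ('a \<Rightarrow> real)" where
  "cond_exp_part M P X = real_cond_exp M (sigma (space M) P) X"

definition order_conv :: "'a measure \<Rightarrow> (real \<Rightarrow> real) \<Rightarrow> 'i set \<Rightarrow> ('i \<Rightarrow> 'i \<Rightarrow> bool)
    \<Rightarrow> ('i \<Rightarrow> 'a \<Rightarrow> real) \<Rightarrow> ('a \<Rightarrow> real) \<Rightarrow> bool" where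
  "order_conv M \<Phi> I le x X \<longleftrightarrow>
     X \<in> LPhi M \<Phi> \<and> (\<forall>i\<in>I. x i \<in> LPhi M \<Phi>) \<and>
     (\<exists>Y. (\<forall>i\<in>I. Y i \<in> LPhi M \<Phi>)
        \<and> (\<forall>i\<in>I. \<forall>j\<in>I. le i j \<longrightarrow> (AE \<omega> in M. Y j \<omega> \<le> Y i \<omega>))
        \<and> (\<forall>i\<in>I. AE \<omega> in M. 0 \<le> Y i \<omega>)
        \<and> (\<forall>Z\<in>LPhi M \<Phi>. (\<forall>i\<in>I. AE \<omega> in M. Z \<omega> \<le> Y i \<omega>) \<longrightarrow> (AE \<omega> in M. Z \<omega> \<le> 0))
        \<and> (\<forall>i\<in>I. AE \<omega> in M. \<bar>x i \<omega> - X \<omega>\<bar> \<le> Y i \<omega>))"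

end

theory Submission
  imports Defs
begin

lemma subalg_part:
  assumes "prob_space M" "P \<subseteq> sets M"
  shows "sigma_finite_subalgebra M (sigma (space M) P)"
proof -
  interpret prob_space M by fact
  have P: "P \<subseteq> Pow (space M)" using assms(2) sets.sets_into_space by auto
  have "subalgebra M (sigma (space M) P)"
    unfolding subalgebra_def using P assms(2)
    by (simp add: sets.sigma_sets_subset)
  then have "finite_measure_subalgebra M (sigma (space M) P)"
    by (simp add: finite_measure_axioms finite_measure_subalgebra.intro finite_measure_subalgebra_axioms_def)
  then show ?thesis by (rule finite_measure_subalgebra_is_sigma_finite)
qed

lemma Phi_meas:
  assumes "orlicz_fun \<Phi>" "f \<in> borel_measurable M" "l \<ge> 0"
  shows "(\<lambda>x. \<Phi> (\<bar>f x\<bar> / l)) \<in> borel_measurable M"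
proof -
  have mono: "mono_on {0..} \<Phi>" using assms(1) unfolding orlicz_fun_def by auto
  have "mono (\<lambda>t. \<Phi> (max 0 t))"
    by (rule monoI) (auto intro!: mono_onD[OF mono])
  then have m1: "(\<lambda>t. \<Phi> (max 0 t)) \<in> borel_measurable borel" by (rule borel_measurable_mono)
  have m2: "(\<lambda>x. \<bar>f x\<bar> / l) \<in> borel_measurable M" using assms(2) by measurable
  have "(\<lambda>x. \<Phi> (max 0 (\<bar>f x\<bar> / l))) \<in> borel_measurable M"
    using measurable_compose[OF m2 m1] by simp
  moreover have "\<And>x. \<Phi> (max 0 (\<bar>f x\<bar> / l)) = \<Phi> (\<bar>f x\<bar> / l)"
    using assms(3) by (auto simp: max_def)
  ultimately show ?thesis by simp
qed

lemma bounded_LPhi: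
  assumes "prob_space M" "orlicz_fun \<Phi>" "f \<in> borel_measurable M" "AE x in M. \<bar>f x\<bar> \<le> C"
  shows "f \<in> LPhi M \<Phi>"
proof -
  interpret prob_space M by fact
  have cv: "convex_on {0..} \<Phi>" and mono: "mono_on {0..} \<Phi>" and z: "\<Phi> 0 = 0"
    and nn: "\<forall>t\<ge>0. 0 \<le> \<Phi> t"
    using assms(2) unfolding orlicz_fun_def by auto
  define C' where "C' = max C 0"
  have C'0: "C' \<ge> 0" by (simp add: C'_def)
  have bd: "AE x in M. \<bar>f x\<bar> \<le> C'" using assms(4) by eventually_elim (auto simp: C'_def)
  define l where "l = C' * (\<Phi> 1 + 1) + 1"
  have P1: "\<Phi> 1 \<ge> 0" using nn by auto
  have l0: "l > 0" unfolding l_def using C'0 P1 by (simp add: add_nonneg_pos)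
  define t where "t = C' / l"
  have t0: "t \<ge> 0" using C'0 l0 by (simp add: t_def)
  have "C' \<le> l" unfolding l_def using C'0 P1 by (simp add: algebra_simps)
  then have t1: "t \<le> 1" unfolding t_def using l0 by simp
  have "C' * \<Phi> 1 \<le> l" unfolding l_def using C'0 P1 by (simp add: algebra_simps)
  then have tP: "t * \<Phi> 1 \<le> 1" unfolding t_def using l0 by simp
  have "\<Phi> t = \<Phi> ((1 - t) *\<^sub>R 0 + t *\<^sub>R 1)" by simp
  also have "\<dots> \<le> (1 - t) * \<Phi> 0 + t * \<Phi> 1"
    using t0 t1 by (intro convex_onD[OF cv]) auto
  also have "\<dots> \<le> 1" using z tP by simp
  finally have Pt: "\<Phi> t \<le> 1" .
  have "(\<integral>\<^sup>+ \<omega>. ennreal (\<Phi> (\<bar>f \<omega>\<bar> / l)) \<partial>M) \<le> (\<integral>\<^sup>+ \<omega>. ennreal (\<Phi> t) \<partial>M)"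
  proof (rule nn_integral_mono_AE)
    show "AE x in M. ennreal (\<Phi> (\<bar>f x\<bar> / l)) \<le> ennreal (\<Phi> t)"
      using bd
    proof eventually_elim
      case (elim x)
      have "\<bar>f x\<bar> / l \<le> t" unfolding t_def using l0 elim by (simp add: divide_right_mono)
      then have "\<Phi> (\<bar>f x\<bar> / l) \<le> \<Phi> t" using l0 t0 by (intro mono_onD[OF mono]) auto
      then show ?case by (simp add: ennreal_leI)
    qed
  qed
  also have "\<dots> = ennreal (\<Phi> t)" by (simp add: emeasure_space_1)
  also have "\<dots> \<le> 1" using Pt by simp
  finally show ?thesis unfolding LPhi_def using assms(3) l0 by auto
qed

lemma LPhi_integrable:
  assumes "prob_space M" "orlicz_fun \<Phi>" "X \<in> LPhi M \<Phi>"
  shows "integrable M X"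
proof -
  interpret prob_space M by fact
  have mono: "mono_on {0..} \<Phi>" and nn: "\<forall>t\<ge>0. 0 \<le> \<Phi> t"
    and lim: "filterlim (\<lambda>t. \<Phi> t / t) at_top at_top"
    using assms(2) unfolding orlicz_fun_def by auto
  have Xm: "X \<in> borel_measurable M" using assms(3) unfolding LPhi_def by auto
  obtain l where l0: "l > 0" and li: "(\<integral>\<^sup>+ \<omega>. ennreal (\<Phi> (\<bar>X \<omega>\<bar> / l)) \<partial>M) \<le> 1"
    using assms(3) unfolding LPhi_def by auto
  have "eventually (\<lambda>t. \<Phi> t / t \<ge> 1) at_top" using lim by (simp add: filterlim_at_top)
  then obtain T where T: "\<And>t. t \<ge> T \<Longrightarrow> \<Phi> t / t \<ge> 1" by (auto simp: eventually_at_top_linorder)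
  define T' where "T' = max T 1"
  have key: "\<And>t. t \<ge> 0 \<Longrightarrow> t \<le> T' + \<Phi> t"
  proof -
    fix t :: real assume t: "t \<ge> 0"
    show "t \<le> T' + \<Phi> t"
    proof (cases "t \<ge> T'")
      case True
      then have "t > 0" "t \<ge> T" unfolding T'_def by auto
      then have "\<Phi> t / t \<ge> 1" by (intro T) simp
      then have "\<Phi> t \<ge> t" using \<open>t > 0\<close> by (simp add: le_divide_eq)
      then show ?thesis unfolding T'_def by linarith
    next
      case False then show ?thesis using nn t by force
    qed
  qed
  have Pm: "(\<lambda>x. \<Phi> (\<bar>X x\<bar> / l)) \<in> borel_measurable M" using Phi_meas[OF assms(2) Xm] l0 by simp
  have "(\<integral>\<^sup>+ x. ennreal (norm (X x)) \<partial>M) \<le> (\<integral>\<^sup>+ x. ennreal (l * T') + ennreal l * ennreal (\<Phi> (\<bar>X x\<bar> / l)) \<partial>M)"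
  proof (rule nn_integral_mono)
    fix x
    have "\<bar>X x\<bar> / l \<le> T' + \<Phi> (\<bar>X x\<bar> / l)" using key l0 by simp
    then have "\<bar>X x\<bar> \<le> l * T' + l * \<Phi> (\<bar>X x\<bar> / l)" using l0 by (simp add: field_simps)
    moreover have "\<Phi> (\<bar>X x\<bar> / l) \<ge> 0" using nn l0 by simp
    moreover have "T' \<ge> 0" by (simp add: T'_def)
    note facts = calculation
    ultimately have "ennreal (norm (X x)) \<le> ennreal (l * T' + l * \<Phi> (\<bar>X x\<bar> / l))"
      by (simp add: ennreal_leI)
    also have "\<dots> = ennreal (l * T') + ennreal l * ennreal (\<Phi> (\<bar>X x\<bar> / l))"
      using l0 \<open>T' \<ge> 0\<close> \<open>\<Phi> (\<bar>X x\<bar> / l) \<ge> 0\<close> by (simp add: ennreal_plus ennreal_mult)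
    finally show "ennreal (norm (X x)) \<le> ennreal (l * T') + ennreal l * ennreal (\<Phi> (\<bar>X x\<bar> / l))" .
  qed
  also have "\<dots> = ennreal (l * T') + ennreal l * (\<integral>\<^sup>+ x. ennreal (\<Phi> (\<bar>X x\<bar> / l)) \<partial>M)"
    using Pm by (simp add: nn_integral_add nn_integral_cmult emeasure_space_1)
  also have "\<dots> \<le> ennreal (l * T') + ennreal l * 1" by (rule add_left_mono, rule mult_left_mono[OF li]) simp
  also have "\<dots> < \<infinity>" by simp
  finally show ?thesis using Xm by (simp add: integrable_iff_bounded)
qed

lemma cond_exp_bounded:
  assumes "prob_space M" "P \<subseteq> sets M" "integrable M X" "AE x in M. \<bar>X x\<bar> \<le> C"
  shows "AE x in M. \<bar>cond_exp_part M P X x\<bar> \<le> C"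
proof -
  interpret sigma_finite_subalgebra M "sigma (space M) P" using subalg_part assms(1,2) .
  have "AE x in M. X x \<le> C" using assms(4) by eventually_elim auto
  then have a: "AE x in M. real_cond_exp M (sigma (space M) P) X x \<le> C"
    using real_cond_exp_le_c assms(3) by blast
  have "AE x in M. X x \<ge> -C" using assms(4) by eventually_elim auto
  then have b: "AE x in M. real_cond_exp M (sigma (space M) P) X x \<ge> -C"
    using real_cond_exp_ge_c assms(3) by blast
  show ?thesis using a b unfolding cond_exp_part_def by eventually_elim auto
qed

lemma refine_bound:
  assumes "prob_space M" "integrable M X" "e \<ge> 0"
    and Q: "Q \<in> partitions M"
    and cells: "\<And>B. B \<in> Q \<Longrightarrow> \<exists>a. AE w in M. w \<in> B \<longrightarrow> a \<le> X w \<and> X w \<le> a + e"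
  shows "AE w in M. \<bar>cond_exp_part M Q X w - X w\<bar> \<le> e"
proof -
  interpret prob_space M by fact
  have Qs: "Q \<subseteq> sets M" and Qf: "finite Q" and Qd: "disjoint Q" and Qu: "\<Union>Q = space M"
    using Q unfolding partitions_def by auto
  define F where "F = sigma (space M) Q"
  interpret sigma_finite_subalgebra M F unfolding F_def using subalg_part assms(1) Qs .
  have QP: "Q \<subseteq> Pow (space M)" using Qs sets.sets_into_space by auto
  have QF: "B \<in> sets F" if "B \<in> Q" for B
    unfolding F_def using QP that by (simp add: sigma_sets.Basic)
  define a where "a B = (SOME a. AE w in M. w \<in> B \<longrightarrow> a \<le> X w \<and> X w \<le> a + e)" for B
  have a: "AE w in M. w \<in> B \<longrightarrow> a B \<le> X w \<and> X w \<le> a B + e" if "B \<in> Q" for B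
    unfolding a_def using cells[OF that] by (rule someI_ex)
  define l where "l w = (\<Sum>B\<in>Q. a B * indicator B w)" for w
  have lF: "l \<in> borel_measurable F" unfolding l_def
    using QF by (intro borel_measurable_sum borel_measurable_times borel_measurable_const borel_measurable_indicator) auto
  have lM: "l \<in> borel_measurable M" using lF measurable_from_subalg[OF subalg] by blast
  have li: "integrable M l" unfolding l_def
  proof (rule Bochner_Integration.integrable_sum)
    fix B assume "B \<in> Q"
    then have "B \<in> sets M" using Qs by auto
    then have "integrable M (indicator B :: 'a \<Rightarrow> real)" by (intro integrable_real_indicator) (auto simp: emeasure_eq_measure)
    then show "integrable M (\<lambda>w. a B * indicator B w)" by (rule integrable_mult_right)
  qed
  have le: "integrable M (\<lambda>w. l w + e)" using li by simp
  have lval: "l w = a B" if "B \<in> Q" "w \<in> B" for B w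
  proof -
    have "l w = a B * indicator B w + (\<Sum>B'\<in>Q - {B}. a B' * indicator B' w)"
      unfolding l_def using Qf that(1) by (rule sum.remove)
    also have "(\<Sum>B'\<in>Q - {B}. a B' * indicator B' w) = 0"
    proof (rule sum.neutral, intro ballI)
      fix B' assume "B' \<in> Q - {B}"
      then have "B' \<inter> B = {}" using Qd that(1) unfolding pairwise_def disjnt_def by auto
      then show "a B' * indicator B' w = 0" using that(2) by (auto simp: indicator_def)
    qed
    finally show ?thesis using that(2) by simp
  qed
  have bnd: "AE w in M. l w \<le> X w \<and> X w \<le> l w + e"
  proof -
    have "AE w in M. \<forall>B\<in>Q. w \<in> B \<longrightarrow> a B \<le> X w \<and> X w \<le> a B + e"
      using Qf a by (intro AE_finite_allI) auto
    then show ?thesis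
    proof (rule AE_mp, intro AE_I2 impI)
      fix w assume w: "w \<in> space M" and h: "\<forall>B\<in>Q. w \<in> B \<longrightarrow> a B \<le> X w \<and> X w \<le> a B + e"
      obtain B where B: "B \<in> Q" "w \<in> B" using w Qu by auto
      show "l w \<le> X w \<and> X w \<le> l w + e" using h B lval[OF B] by auto
    qed
  qed
  have c1: "AE w in M. real_cond_exp M F l w \<le> real_cond_exp M F X w"
    using bnd assms(2) li by (intro real_cond_exp_mono) auto
  have c2: "AE w in M. real_cond_exp M F X w \<le> real_cond_exp M F (\<lambda>w. l w + e) w"
    using bnd assms(2) le by (intro real_cond_exp_mono) auto
  have c3: "AE w in M. real_cond_exp M F l w = l w"
    using li lF by (rule real_cond_exp_F_meas)
  have c4: "AE w in M. real_cond_exp M F (\<lambda>w. l w + e) w = l w + e"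
    using le lF by (intro real_cond_exp_F_meas) auto
  show ?thesis using c1 c2 c3 c4 bnd unfolding cond_exp_part_def F_def[symmetric]
    by eventually_elim auto
qed

lemma level_partition:
  fixes X :: "'a \<Rightarrow> real"
  assumes "prob_space M" and Xm[measurable]: "X \<in> borel_measurable M"
    and "AE w in M. \<bar>X w\<bar> \<le> C" and e: "e > 0"
  shows "\<exists>Q\<in>partitions M. \<forall>B\<in>Q. \<exists>a. AE w in M. w \<in> B \<longrightarrow> a \<le> X w \<and> X w \<le> a + e"
proof -
  interpret prob_space M by fact
  define C' where "C' = \<bar>C\<bar>"
  have CC: "C \<le> C'" by (simp add: C'_def)
  have bd: "AE w in M. \<bar>X w\<bar> \<le> C'"
    by (rule eventually_mono[OF assms(3)]) (use CC in linarith)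
  define K :: int where "K = \<lceil>C' / e\<rceil> + 1"
  define g where "g w = max (-K) (min K \<lfloor>X w / e\<rfloor>)" for w
  have gm[measurable]: "g \<in> measurable M (count_space UNIV)" unfolding g_def by measurable
  have "C' / e \<ge> 0" using e by (simp add: C'_def)
  then have K1: "K \<ge> 1" unfolding K_def by simp
  have grange: "g w \<in> {-K..K}" for w unfolding g_def using K1 by auto
  define E where "E k = {w \<in> space M. g w = k}" for k
  have Em[measurable]: "E k \<in> sets M" for k unfolding E_def by measurable
  define G where "G = {k \<in> {-K..K}. measure M (E k) > 0}"
  have Gf: "finite G" unfolding G_def by (rule finite_subset[of _ "{-K..K}"]) auto
  have "G \<noteq> {}"
  proof
    assume G0: "G = {}"
    have "space M = (\<Union>k\<in>{-K..K}. E k)" using grange unfolding E_def by auto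
    then have "measure M (space M) \<le> (\<Sum>k\<in>{-K..K}. measure M (E k))"
      using measure_UNION_le[of "{-K..K}" E M] by auto
    also have "\<dots> = 0" using G0 unfolding G_def by (intro sum.neutral) (auto simp: not_less measure_le_0_iff)
    finally show False using prob_space by simp
  qed
  then obtain k0 where k0: "k0 \<in> G" by auto
  define h where "h w = (if g w \<in> G then g w else k0)" for w
  have hm[measurable]: "h \<in> measurable M (count_space UNIV)" unfolding h_def by measurable
  define H where "H k = {w \<in> space M. h w = k}" for k
  have Hm: "H k \<in> sets M" for k unfolding H_def by measurable
  define Q where "Q = H ` G"
  have EH: "E k \<subseteq> H k" if "k \<in> G" for k using that unfolding E_def H_def h_def by auto
  have Q: "Q \<in> partitions M"
    unfolding partitions_def
  proof (intro CollectI conjI ballI)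
    show "finite Q" unfolding Q_def using Gf by simp
    show "Q \<subseteq> sets M" unfolding Q_def using Hm by auto
    fix A assume "A \<in> Q"
    then obtain k where k: "k \<in> G" "A = H k" unfolding Q_def by auto
    have "measure M (E k) \<le> measure M (H k)" using EH[OF k(1)] Hm by (intro finite_measure_mono) auto
    then show "measure M A > 0" using k unfolding G_def by auto
  next
    show "disjoint Q" unfolding Q_def pairwise_def disjnt_def H_def by auto
    show "\<Union>Q = space M"
    proof
      show "\<Union>Q \<subseteq> space M" unfolding Q_def H_def by auto
      show "space M \<subseteq> \<Union>Q"
      proof
        fix w assume w: "w \<in> space M"
        have "h w \<in> G" unfolding h_def using k0 by auto
        then show "w \<in> \<Union>Q" unfolding Q_def H_def using w by auto
      qed
    qed
  qed
  have nulls: "AE w in M. \<forall>j\<in>{-K..K} - G. w \<notin> E j"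
  proof (intro AE_finite_allI)
    fix j assume j: "j \<in> {-K..K} - G"
    then have "measure M (E j) = 0" unfolding G_def using measure_nonneg[of M "E j"] by auto
    then have "E j \<in> null_sets M" using Em by (auto simp: emeasure_eq_measure)
    then show "AE w in M. w \<notin> E j" by (rule AE_not_in)
  qed auto
  have "\<forall>B\<in>Q. \<exists>a. AE w in M. w \<in> B \<longrightarrow> a \<le> X w \<and> X w \<le> a + e"
  proof
    fix B assume "B \<in> Q"
    then obtain k where k: "k \<in> G" "B = H k" unfolding Q_def by auto
    have "AE w in M. w \<in> B \<longrightarrow> of_int k * e \<le> X w \<and> X w \<le> of_int k * e + e"
      using bd nulls
    proof eventually_elim
      case (elim w)
      show ?case
      proof
        assume wB: "w \<in> B"
        then have ws: "w \<in> space M" and hw: "h w = k" using k unfolding H_def by auto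
        have "g w \<in> G"
        proof (rule ccontr)
          assume "g w \<notin> G"
          then have "g w \<in> {-K..K} - G" using grange by auto
          then show False using elim(2) ws unfolding E_def by auto
        qed
        then have gk: "g w = k" using hw unfolding h_def by auto
        have r1: "X w / e \<le> C' / e" using elim(1) e by (simp add: divide_right_mono)
        have r2': "- C' \<le> X w" using elim(1) by (simp add: abs_le_iff)
        have r2: "- (C' / e) \<le> X w / e" using divide_right_mono[OF r2', of e] e by simp
        have f1: "\<lfloor>X w / e\<rfloor> \<le> \<lfloor>C' / e\<rfloor>" using r1 by (rule floor_mono)
        have f2: "\<lfloor>C' / e\<rfloor> \<le> \<lceil>C' / e\<rceil>" by (rule floor_le_ceiling)
        have f3: "\<lfloor>- (C' / e)\<rfloor> \<le> \<lfloor>X w / e\<rfloor>" using r2 by (rule floor_mono)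
        have f4: "\<lfloor>- (C' / e)\<rfloor> = - \<lceil>C' / e\<rceil>" by (rule floor_minus)
        have "\<lfloor>X w / e\<rfloor> \<le> K" "- K \<le> \<lfloor>X w / e\<rfloor>" using f1 f2 f3 f4 unfolding K_def by linarith+
        note fb = this
        have "\<lfloor>X w / e\<rfloor> = k" using gk fb unfolding g_def by auto
        then have "of_int k \<le> X w / e" "X w / e < of_int k + 1" by linarith+
        then show "of_int k * e \<le> X w \<and> X w \<le> of_int k * e + e"
          using e by (auto simp: field_simps)
      qed
    qed
    then show "\<exists>a. AE w in M. w \<in> B \<longrightarrow> a \<le> X w \<and> X w \<le> a + e" by blast
  qed
  then show ?thesis using Q by blast
qed

lemma le_of_inverse_bound:
  fixes a c :: real
  assumes "\<And>n. a \<le> c + inverse (real (Suc n))"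
  shows "a \<le> c"
proof (rule ccontr)
  assume "\<not> a \<le> c"
  then have "a - c > 0" by simp
  then obtain n where "inverse (real (Suc n)) < a - c" using reals_Archimedean by blast
  then show False using assms[of n] by linarith
qed

lemma part_refines_trans:
  "part_refines P Q \<Longrightarrow> part_refines Q R \<Longrightarrow> part_refines P R"
  unfolding part_refines_def by (meson order_trans)

lemma part_refines_refl: "part_refines P P"
  unfolding part_refines_def by auto

lemma if_dir:
  fixes X :: "'a \<Rightarrow> real"
  assumes PS: "prob_space M" and OF: "orlicz_fun \<Phi>" and XL: "X \<in> LPhi M \<Phi>" and XI: "X \<in> Linf M"
  shows "order_conv M \<Phi> (partitions M) part_refines (\<lambda>P. cond_exp_part M P X) X"
proof -
  interpret prob_space M by fact
  have Xm[measurable]: "X \<in> borel_measurable M" using XL unfolding LPhi_def by auto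
  obtain C0 where C0: "AE w in M. \<bar>X w\<bar> \<le> C0" using XI unfolding Linf_def by auto
  define C where "C = \<bar>C0\<bar>"
  have C0C: "C0 \<le> C" by (simp add: C_def)
  have bd: "AE w in M. \<bar>X w\<bar> \<le> C"
    by (rule eventually_mono[OF C0]) (use C0C in linarith)
  have C0': "C \<ge> 0" by (simp add: C_def)
  have Xint: "integrable M X" using LPhi_integrable[OF PS OF XL] .
  have Ps: "P \<subseteq> sets M" if "P \<in> partitions M" for P using that unfolding partitions_def by auto
  have Ebd: "AE w in M. \<bar>cond_exp_part M P X w\<bar> \<le> C" if "P \<in> partitions M" for P
    using cond_exp_bounded[OF PS Ps[OF that] Xint bd] .
  have Em: "cond_exp_part M P X \<in> borel_measurable M" for P
    unfolding cond_exp_part_def by (rule borel_measurable_cond_exp2)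
  define D where "D P = {e::real. e \<ge> 0 \<and> (\<forall>P'\<in>partitions M. part_refines P P' \<longrightarrow>
      (AE w in M. \<bar>cond_exp_part M P' X w - X w\<bar> \<le> e))}" for P
  define c where "c P = Inf (D P)" for P
  define Y where "Y P = (\<lambda>w::'a. c P)" for P
  have twoC: "2 * C \<in> D P" for P
    unfolding D_def
  proof (intro CollectI conjI ballI impI)
    show "0 \<le> 2 * C" using C0' by simp
    fix P' assume "P' \<in> partitions M"
    from Ebd[OF this] bd show "AE w in M. \<bar>cond_exp_part M P' X w - X w\<bar> \<le> 2 * C"
      by eventually_elim auto
  qed
  have Dne: "D P \<noteq> {}" for P using twoC by auto
  have Dbdd: "bdd_below (D P)" for P unfolding D_def bdd_below_def by auto
  have c0: "c P \<ge> 0" for P unfolding c_def using Dne by (intro cInf_greatest) (auto simp: D_def)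
  have cle: "c P \<le> e" if "e \<in> D P" for P e unfolding c_def using that Dbdd by (intro cInf_lower)
  have dom: "AE w in M. \<bar>cond_exp_part M P X w - X w\<bar> \<le> c P" if P: "P \<in> partitions M" for P
  proof -
    have "AE w in M. \<bar>cond_exp_part M P X w - X w\<bar> \<le> c P + inverse (real (Suc n))" for n
    proof -
      have "Inf (D P) < c P + inverse (real (Suc n))" unfolding c_def by simp
      then obtain e where e: "e \<in> D P" "e < c P + inverse (real (Suc n))"
        using cInf_lessD[OF Dne] by blast
      then have "AE w in M. \<bar>cond_exp_part M P X w - X w\<bar> \<le> e"
        using P part_refines_refl unfolding D_def by auto
      then show ?thesis by (rule eventually_mono) (use e(2) in auto)
    qed
    then have "AE w in M. \<forall>n. \<bar>cond_exp_part M P X w - X w\<bar> \<le> c P + inverse (real (Suc n))"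
      by (simp add: AE_all_countable)
    then show ?thesis by eventually_elim (rule le_of_inverse_bound, auto)
  qed
  have small: "\<exists>P\<in>partitions M. c P \<le> e" if e: "e > 0" for e
  proof -
    obtain Q where Q: "Q \<in> partitions M"
      and cells: "\<forall>B\<in>Q. \<exists>a. AE w in M. w \<in> B \<longrightarrow> a \<le> X w \<and> X w \<le> a + e"
      using level_partition[OF PS Xm bd e] by blast
    have "e \<in> D Q" unfolding D_def
    proof (intro CollectI conjI ballI impI)
      show "0 \<le> e" using e by simp
      fix P' assume P': "P' \<in> partitions M" and r: "part_refines Q P'"
      show "AE w in M. \<bar>cond_exp_part M P' X w - X w\<bar> \<le> e"
      proof (rule refine_bound[OF PS Xint _ P'])
        show "0 \<le> e" using e by simp
        fix B assume "B \<in> P'"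
        then obtain A where A: "A \<in> Q" "B \<subseteq> A" using r unfolding part_refines_def by auto
        then obtain a where "AE w in M. w \<in> A \<longrightarrow> a \<le> X w \<and> X w \<le> a + e" using cells by auto
        then have "AE w in M. w \<in> B \<longrightarrow> a \<le> X w \<and> X w \<le> a + e"
          by eventually_elim (use A(2) in auto)
        then show "\<exists>a. AE w in M. w \<in> B \<longrightarrow> a \<le> X w \<and> X w \<le> a + e" by blast
      qed
    qed
    then show ?thesis using Q cle by blast
  qed
  show ?thesis unfolding order_conv_def
  proof (intro conjI ballI exI[of _ Y] impI)
    show "X \<in> LPhi M \<Phi>" by fact
    fix P assume P: "P \<in> partitions M"
    show "cond_exp_part M P X \<in> LPhi M \<Phi>" using bounded_LPhi[OF PS OF Em Ebd[OF P]] .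
  next
    fix P assume "P \<in> partitions M"
    show "Y P \<in> LPhi M \<Phi>" unfolding Y_def by (rule bounded_LPhi[OF PS OF]) auto
  next
    fix P Q assume "P \<in> partitions M" "Q \<in> partitions M" "part_refines P Q"
    have "D P \<subseteq> D Q" unfolding D_def using part_refines_trans[OF \<open>part_refines P Q\<close>] by auto
    then have "c Q \<le> c P" unfolding c_def using Dne Dbdd by (intro cInf_superset_mono) auto
    then show "AE w in M. Y Q w \<le> Y P w" unfolding Y_def by simp
  next
    fix P assume "P \<in> partitions M"
    show "AE w in M. 0 \<le> Y P w" unfolding Y_def using c0 by simp
  next
    fix Z assume Z: "Z \<in> LPhi M \<Phi>" and ZY: "\<forall>P\<in>partitions M. AE w in M. Z w \<le> Y P w"
    have "AE w in M. Z w \<le> 0 + inverse (real (Suc n))" for n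
    proof -
      obtain P where P: "P \<in> partitions M" "c P \<le> inverse (real (Suc n))" using small[of "inverse (real (Suc n))"] by auto
      from ZY P(1) have "AE w in M. Z w \<le> Y P w" by auto
      then show ?thesis unfolding Y_def by (rule eventually_mono) (use P(2) in auto)
    qed
    then have "AE w in M. \<forall>n. Z w \<le> 0 + inverse (real (Suc n))" by (simp add: AE_all_countable)
    then show "AE w in M. Z w \<le> 0" by eventually_elim (rule le_of_inverse_bound, auto)
  next
    fix P assume "P \<in> partitions M"
    then show "AE w in M. \<bar>cond_exp_part M P X w - X w\<bar> \<le> Y P w" unfolding Y_def using dom by auto
  qed
qed

lemma small_subset:
  assumes "prob_space M" "nonatomic M" "A \<in> sets M" "measure M A > 0" "d > 0"
  shows "\<exists>B\<in>sets M. B \<subseteq> A \<and> 0 < measure M B \<and> measure M B \<le> d"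
proof -
  interpret prob_space M by fact
  have step: "\<exists>B\<in>sets M. B \<subseteq> A \<and> 0 < measure M B \<and> measure M B \<le> measure M A / 2 ^ k" for k
  proof (induction k)
    case 0 then show ?case using assms(3,4) by auto
  next
    case (Suc k)
    then obtain B where B: "B \<in> sets M" "B \<subseteq> A" "0 < measure M B" "measure M B \<le> measure M A / 2 ^ k" by auto
    obtain B' where B': "B' \<in> sets M" "B' \<subseteq> B" "0 < measure M B'" "measure M B' < measure M B"
      using assms(2) B(1,3) unfolding nonatomic_def by blast
    have diff: "measure M (B - B') = measure M B - measure M B'"
      using B' B(1) by (intro finite_measure_Diff) auto
    have h: "measure M B / 2 \<le> measure M A / 2 ^ Suc k" using B(4) by (simp add: divide_right_mono)
    show ?case
    proof (cases "measure M B' \<le> measure M B / 2")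
      case True
      then show ?thesis using B B' h by (intro bexI[of _ B']) auto
    next
      case False
      then have "measure M (B - B') \<le> measure M B / 2" using diff by simp
      then show ?thesis using B B' diff h by (intro bexI[of _ "B - B'"]) auto
    qed
  qed
  obtain k where "measure M A / d < 2 ^ k" using real_arch_pow[of 2 "measure M A / d"] by auto
  then have "measure M A / 2 ^ k \<le> d" using assms(5) by (simp add: field_simps)
  then show ?thesis using step[of k] by auto
qed

lemma two_cell_sets:
  assumes "C \<subseteq> \<Omega>"
  shows "sigma_sets \<Omega> {C, \<Omega> - C} \<subseteq> {{}, C, \<Omega> - C, \<Omega>}"
proof
  fix A assume "A \<in> sigma_sets \<Omega> {C, \<Omega> - C}"
  then show "A \<in> {{}, C, \<Omega> - C, \<Omega>}"
  proof induct
    case (Basic a) then show ?case by auto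
  next
    case Empty then show ?case by auto
  next
    case (Compl a) then show ?case using assms by auto
  next
    case (Union A)
    define p where "p = (\<exists>i. A i = C \<or> A i = \<Omega>)"
    define q where "q = (\<exists>i. A i = \<Omega> - C \<or> A i = \<Omega>)"
    have "(\<Union>i. A i) = (if p then C else {}) \<union> (if q then \<Omega> - C else {})"
    proof (intro equalityI subsetI)
      fix x assume "x \<in> (\<Union>i. A i)"
      then obtain i where "x \<in> A i" by auto
      moreover have "A i \<in> {{}, C, \<Omega> - C, \<Omega>}" using Union by auto
      ultimately show "x \<in> (if p then C else {}) \<union> (if q then \<Omega> - C else {})"
        unfolding p_def q_def by auto
    next
      fix x assume "x \<in> (if p then C else {}) \<union> (if q then \<Omega> - C else {})"
      then show "x \<in> (\<Union>i. A i)" unfolding p_def q_def using assms by (auto split: if_splits)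
    qed
    then show ?case using assms by (auto split: if_splits)
  qed
qed

lemma two_cell_cond_exp:
  fixes X :: "'a \<Rightarrow> real"
  assumes PS: "prob_space M" and Cs: "C \<in> sets M" and XI: "integrable M X"
    and C0: "measure M C > 0" and C1: "measure M (space M - C) > 0"
  shows "AE w in M. w \<in> C \<longrightarrow> cond_exp_part M {C, space M - C} X w = (\<integral>x\<in>C. X x \<partial>M) / measure M C"
proof -
  interpret prob_space M by fact
  define Q where "Q = {C, space M - C}"
  have Qs: "Q \<subseteq> sets M" unfolding Q_def using Cs by auto
  define F where "F = sigma (space M) Q"
  interpret sigma_finite_subalgebra M F unfolding F_def using subalg_part PS Qs .
  have CO: "C \<subseteq> space M" using Cs sets.sets_into_space by auto
  have QP: "Q \<subseteq> Pow (space M)" using Qs sets.sets_into_space by auto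
  have sF: "sets F = sigma_sets (space M) Q" unfolding F_def using QP by simp
  have CF: "C \<in> sets F" unfolding sF Q_def by (auto intro: sigma_sets.Basic)
  have spF: "space F = space M" unfolding F_def by (simp add: space_measure_of_conv)
  define a where "a = (\<integral>x\<in>C. X x \<partial>M) / measure M C"
  define b where "b = (\<integral>x\<in>space M - C. X x \<partial>M) / measure M (space M - C)"
  define g where "g w = (if w \<in> C then a else b)" for w
  have gF: "g \<in> borel_measurable F" unfolding g_def
  proof (rule measurable_If_set)
    have "C \<inter> space F = C" using spF CO by auto
    then show "C \<inter> space F \<in> sets F" using CF by simp
  qed auto
  have gM: "g \<in> borel_measurable M" using gF measurable_from_subalg[OF subalg] by blast
  have gI: "integrable M g"
    by (rule integrable_const_bound[where B="max \<bar>a\<bar> \<bar>b\<bar>"]) (auto simp: g_def gM)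
  have Cc: "space M - C \<in> sets M" using Cs by auto
  have siX: "set_integrable M S X" if "S \<in> sets M" for S
    unfolding set_integrable_def using integrable_mult_indicator[OF that XI] by simp
  have siG: "set_integrable M S g" if "S \<in> sets M" for S
    unfolding set_integrable_def using integrable_mult_indicator[OF that gI] by simp
  have intC: "(\<integral>x\<in>C. g x \<partial>M) = (\<integral>x\<in>C. X x \<partial>M)"
  proof -
    have "(\<integral>x\<in>C. g x \<partial>M) = (\<integral>x\<in>C. a \<partial>M)" using Cs by (intro set_lebesgue_integral_cong) (auto simp: g_def)
    also have "\<dots> = measure M C * a" using Cs by (simp add: set_integral_const emeasure_eq_measure)
    finally show ?thesis unfolding a_def using C0 by simp
  qed
  have intCc: "(\<integral>x\<in>space M - C. g x \<partial>M) = (\<integral>x\<in>space M - C. X x \<partial>M)"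
  proof -
    have "(\<integral>x\<in>space M - C. g x \<partial>M) = (\<integral>x\<in>space M - C. b \<partial>M)" using Cc by (intro set_lebesgue_integral_cong) (auto simp: g_def)
    also have "\<dots> = measure M (space M - C) * b" using Cc by (simp add: set_integral_const emeasure_eq_measure)
    finally show ?thesis unfolding b_def using C1 by simp
  qed
  have "AE w in M. real_cond_exp M F X w = g w"
  proof (rule real_cond_exp_charact)
    fix A assume "A \<in> sets F"
    then have "A \<in> {{}, C, space M - C, space M}" using two_cell_sets[OF CO] unfolding sF Q_def by auto
    then show "(\<integral>x\<in>A. X x \<partial>M) = (\<integral>x\<in>A. g x \<partial>M)"
    proof (elim insertE)
      assume "A = space M"
      have U: "space M = C \<union> (space M - C)" using CO by auto
      have "(\<integral>x\<in>space M. X x \<partial>M) = (\<integral>x\<in>C. X x \<partial>M) + (\<integral>x\<in>space M - C. X x \<partial>M)"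
        by (subst U, rule set_integral_Un) (auto intro: siX Cs Cc)
      moreover have "(\<integral>x\<in>space M. g x \<partial>M) = (\<integral>x\<in>C. g x \<partial>M) + (\<integral>x\<in>space M - C. g x \<partial>M)"
        by (subst U, rule set_integral_Un) (auto intro: siG Cs Cc)
      ultimately show ?thesis using intC intCc \<open>A = space M\<close> by simp
    qed (use intC intCc in \<open>auto simp: set_lebesgue_integral_def\<close>)
  qed (use XI gI gF in auto)
  then show ?thesis unfolding cond_exp_part_def F_def[symmetric] Q_def[symmetric] g_def a_def[symmetric]
    by eventually_elim auto
qed

lemma null_of_AE_notin:
  assumes "A \<in> sets M" "AE w in M. w \<notin> A"
  shows "measure M A = 0"
proof -
  have "A \<subseteq> space M" using assms(1) sets.sets_into_space by auto
  then have "{x \<in> space M. \<not> (x \<notin> A)} = A" by auto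
  then have "emeasure M A = 0" by (rule iffD1[OF AE_iff_measurable[OF assms(1)] assms(2)])
  then show ?thesis by (simp add: measure_def)
qed

lemma null_of_not_pos:
  assumes "A \<in> sets M" "\<not> measure M A > 0" "prob_space M"
  shows "A \<in> null_sets M"
proof -
  interpret prob_space M by fact
  have "measure M A = 0" using assms(2) measure_nonneg[of M A] by linarith
  then show ?thesis using assms(1) by (intro null_setsI) (auto simp: emeasure_eq_measure)
qed

lemma LPhi_meas: "f \<in> LPhi M \<Phi> \<Longrightarrow> f \<in> borel_measurable M"
  unfolding LPhi_def by (drule CollectD) (erule conjunct1)

lemma only_if_dir:
  fixes X :: "'a \<Rightarrow> real"
  assumes PS: "prob_space M" and NA: "nonatomic M" and OF: "orlicz_fun \<Phi>" and XL: "X \<in> LPhi M \<Phi>"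
    and OC: "order_conv M \<Phi> (partitions M) part_refines (\<lambda>P. cond_exp_part M P X) X"
  shows "X \<in> Linf M"
proof (rule ccontr)
  assume notinf: "X \<notin> Linf M"
  interpret prob_space M by fact
  have Xm[measurable]: "X \<in> borel_measurable M" using XL unfolding LPhi_def by auto
  have Xint: "integrable M X" using LPhi_integrable[OF PS OF XL] .
  have unb: "\<not> (AE w in M. \<bar>X w\<bar> \<le> c)" for c
  proof
    assume "AE w in M. \<bar>X w\<bar> \<le> c"
    then have "X \<in> Linf M" unfolding Linf_def using Xm by blast
    then show False using notinf by simp
  qed
  obtain Y where YL: "\<forall>i\<in>partitions M. Y i \<in> LPhi M \<Phi>"
    and Ydec: "\<forall>i\<in>partitions M. \<forall>j\<in>partitions M. part_refines i j \<longrightarrow> (AE w in M. Y j w \<le> Y i w)"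
    and Ydom: "\<forall>i\<in>partitions M. AE w in M. \<bar>cond_exp_part M i X w - X w\<bar> \<le> Y i w"
  proof -
    obtain Y where Yall: "(\<forall>i\<in>partitions M. Y i \<in> LPhi M \<Phi>)
        \<and> (\<forall>i\<in>partitions M. \<forall>j\<in>partitions M. part_refines i j \<longrightarrow> (AE \<omega> in M. Y j \<omega> \<le> Y i \<omega>))
        \<and> (\<forall>i\<in>partitions M. AE \<omega> in M. 0 \<le> Y i \<omega>)
        \<and> (\<forall>Z\<in>LPhi M \<Phi>. (\<forall>i\<in>partitions M. AE \<omega> in M. Z \<omega> \<le> Y i \<omega>) \<longrightarrow> (AE \<omega> in M. Z \<omega> \<le> 0))
        \<and> (\<forall>i\<in>partitions M. AE \<omega> in M. \<bar>cond_exp_part M i X \<omega> - X \<omega>\<bar> \<le> Y i \<omega>)"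
      using conjunct2[OF conjunct2[OF OC[unfolded order_conv_def]]] by (rule exE)
    show ?thesis
      apply (rule that)
        apply (rule conjunct1[OF Yall])
       apply (rule conjunct1[OF conjunct2[OF Yall]])
      apply (rule conjunct2[OF conjunct2[OF conjunct2[OF conjunct2[OF Yall]]]])
      done
  qed
  define P0 where "P0 = {space M}"
  have P0: "P0 \<in> partitions M" unfolding partitions_def P0_def by (auto simp: pairwise_def prob_space)
  define Y0 where "Y0 = Y P0"
  have "Y P0 \<in> LPhi M \<Phi>" using YL P0 by (rule bspec)
  then have Y0m[measurable]: "Y0 \<in> borel_measurable M" unfolding Y0_def by (rule LPhi_meas)
  have dom0: "AE w in M. \<bar>cond_exp_part M P X w - X w\<bar> \<le> Y0 w" if P: "P \<in> partitions M" for P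
  proof -
    have PsM: "P \<subseteq> sets M" using P unfolding partitions_def by auto
    have "part_refines P0 P" unfolding part_refines_def P0_def using PsM sets.sets_into_space by auto
    then have h1: "AE w in M. Y P w \<le> Y0 w" unfolding Y0_def using Ydec P0 P by simp
    have h2: "AE w in M. \<bar>cond_exp_part M P X w - X w\<bar> \<le> Y P w" using Ydom P by simp
    show ?thesis using h1 h2 by eventually_elim auto
  qed
  obtain s :: real where s: "s = 1 \<or> s = -1" and spos: "\<And>m. measure M {w \<in> space M. s * X w > m} > 0"
  proof -
    have "\<exists>s::real. (s = 1 \<or> s = -1) \<and> (\<forall>m. measure M {w \<in> space M. s * X w > m} > 0)"
    proof (rule ccontr)
      assume "\<not> ?thesis"
      then obtain m1 m2 where m1: "\<not> measure M {w \<in> space M. 1 * X w > m1} > 0"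
        and m2: "\<not> measure M {w \<in> space M. -1 * X w > m2} > 0" by blast
      have n1: "AE w in M. w \<notin> {w \<in> space M. 1 * X w > m1}"
        by (intro AE_not_in null_of_not_pos[OF _ m1 PS]) measurable
      have n2: "AE w in M. w \<notin> {w \<in> space M. -1 * X w > m2}"
        by (intro AE_not_in null_of_not_pos[OF _ m2 PS]) measurable
      have "AE w in M. \<bar>X w\<bar> \<le> max m1 m2" using n1 n2 AE_space by eventually_elim auto
      then show False using unb by blast
    qed
    then show ?thesis using that by blast
  qed
  obtain L :: real where L0: "L \<ge> 0" and SL: "measure M {w \<in> space M. \<bar>X w\<bar> \<le> L} > 0"
  proof -
    have "\<exists>n::nat. measure M {w \<in> space M. \<bar>X w\<bar> \<le> real n} > 0"
    proof (rule ccontr)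
      assume "\<not> ?thesis"
      then have nn: "\<not> measure M {w \<in> space M. \<bar>X w\<bar> \<le> real n} > 0" for n by blast
      have "AE w in M. w \<notin> {w \<in> space M. \<bar>X w\<bar> \<le> real n}" for n
        by (intro AE_not_in null_of_not_pos[OF _ nn PS]) measurable
      then have "AE w in M. \<forall>n. w \<notin> {w \<in> space M. \<bar>X w\<bar> \<le> real n}" by (simp add: AE_all_countable)
      then have "AE w in M. False" using AE_space
      proof eventually_elim
        case (elim w)
        obtain n where "\<bar>X w\<bar> \<le> real n" using real_arch_simple by blast
        then show False using elim by auto
      qed
      then show False by (simp add: AE_False)
    qed
    then show ?thesis using that by (meson of_nat_0_le_iff)
  qed
  define S where "S = {w \<in> space M. \<bar>X w\<bar> \<le> L}"
  have Sm: "S \<in> sets M" unfolding S_def by measurable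
  have main: "AE w in M. w \<in> S \<longrightarrow> real K \<le> Y0 w" for K :: nat
  proof -
    define A where "A = {w \<in> space M. \<bar>X w\<bar> \<le> L \<and> Y0 w < real K}"
    have Am: "A \<in> sets M" unfolding A_def by measurable
    have "measure M A = 0"
    proof (rule ccontr)
      assume "measure M A \<noteq> 0"
      then have Apos: "measure M A > 0" using measure_nonneg[of M A] by linarith
      define m where "m = 2 * real K + 3 * L + 2"
      define T where "T = {w \<in> space M. s * X w > m}"
      have Tm: "T \<in> sets M" unfolding T_def by measurable
      have Tpos: "measure M T > 0" unfolding T_def by (rule spos)
      obtain A' where A'm: "A' \<in> sets M" and A'A: "A' \<subseteq> A" and A'pos: "0 < measure M A'"
        and A'le: "measure M A' \<le> min (measure M T) (measure M A / 2)"
        using small_subset[OF PS NA Am Apos, of "min (measure M T) (measure M A / 2)"] Tpos Apos by auto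
      define C where "C = A' \<union> T"
      have Cm: "C \<in> sets M" unfolding C_def using A'm Tm by auto
      have CO: "C \<subseteq> space M" using Cm sets.sets_into_space by auto
      have Lm: "L < m" unfolding m_def using L0 by simp
      have sX: "s * X w \<le> \<bar>X w\<bar>" for w using s by auto
      have disj: "A' \<inter> T = {}"
      proof -
        have "w \<notin> T" if "w \<in> A'" for w
        proof -
          have "\<bar>X w\<bar> \<le> L" using that A'A unfolding A_def by auto
          then have "\<not> s * X w > m" using sX[of w] Lm by linarith
          then show ?thesis unfolding T_def by auto
        qed
        then show ?thesis by auto
      qed
      have muC: "measure M C = measure M A' + measure M T"
        unfolding C_def using A'm Tm disj by (rule finite_measure_Union)
      have Cpos: "measure M C > 0" using muC A'pos Tpos by simp
      have "A - A' \<subseteq> space M - C"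
      proof
        fix w assume w: "w \<in> A - A'"
        then have ws: "w \<in> space M" and wL: "\<bar>X w\<bar> \<le> L" unfolding A_def by auto
        have "\<not> s * X w > m" using wL sX[of w] Lm by linarith
        then show "w \<in> space M - C" using w ws unfolding C_def T_def by auto
      qed
      moreover have "measure M (A - A') = measure M A - measure M A'"
        using Am A'm A'A by (intro finite_measure_Diff) auto
      ultimately have Ccpos: "measure M (space M - C) > 0"
        using A'le Am A'm Cm finite_measure_mono[of "A - A'" "space M - C"] Apos by auto
      define Q where "Q = {C, space M - C}"
      have Q: "Q \<in> partitions M"
        unfolding partitions_def Q_def using Cm Cpos Ccpos CO
        by (auto simp: pairwise_def disjnt_def)
      define a where "a = (\<integral>x\<in>C. X x \<partial>M) / measure M C"
      have ce: "AE w in M. w \<in> C \<longrightarrow> cond_exp_part M Q X w = a"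
        unfolding Q_def a_def using two_cell_cond_exp[OF PS Cm Xint Cpos Ccpos] .
      have siX: "set_integrable M B X" if "B \<in> sets M" for B
        unfolding set_integrable_def using integrable_mult_indicator[OF that Xint] by simp
      have siC: "set_integrable M B (\<lambda>_. c::real)" if "B \<in> sets M" for B c
        unfolding set_integrable_def using that
        by (intro integrable_mult_indicator) (auto simp: emeasure_eq_measure)
      have siXs: "set_integrable M B (\<lambda>x. s * X x)" if "B \<in> sets M" for B
        unfolding set_integrable_def using integrable_mult_indicator[OF that integrable_mult_right[OF Xint, of s]] by simp
      have I1: "s * (\<integral>x\<in>A'. X x \<partial>M) \<ge> - L * measure M A'"
      proof -
        have "(\<integral>x\<in>A'. (- L) \<partial>M) \<le> (\<integral>x\<in>A'. s * X x \<partial>M)"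
        proof (rule set_integral_mono[OF siC[OF A'm] siXs[OF A'm]])
          fix x assume "x \<in> A'"
          then have "\<bar>X x\<bar> \<le> L" using A'A unfolding A_def by auto
          then show "- L \<le> s * X x" using s by auto
        qed
        then show ?thesis using A'm by (simp add: set_integral_const emeasure_eq_measure mult.commute)
      qed
      have I2: "s * (\<integral>x\<in>T. X x \<partial>M) \<ge> m * measure M T"
      proof -
        have "(\<integral>x\<in>T. m \<partial>M) \<le> (\<integral>x\<in>T. s * X x \<partial>M)"
        proof (rule set_integral_mono[OF siC[OF Tm] siXs[OF Tm]])
          fix x assume "x \<in> T"
          then show "m \<le> s * X x" unfolding T_def by auto
        qed
        then show ?thesis using Tm by (simp add: set_integral_const emeasure_eq_measure mult.commute)
      qed
      have IC: "(\<integral>x\<in>C. X x \<partial>M) = (\<integral>x\<in>A'. X x \<partial>M) + (\<integral>x\<in>T. X x \<partial>M)"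
        unfolding C_def by (rule set_integral_Un[OF disj siX[OF A'm] siX[OF Tm]])
      have mL: "m - L \<ge> 0" unfolding m_def using L0 by simp
      have p1: "L * measure M A' \<le> L * measure M T" using A'le L0 by (intro mult_left_mono) auto
      have p2: "(m - L) / 2 * measure M C \<le> (m - L) / 2 * (2 * measure M T)"
        using muC A'le mL by (intro mult_left_mono) auto
      have "(m - L) / 2 * measure M C \<le> s * (\<integral>x\<in>C. X x \<partial>M)"
      proof -
        have e1: "(m - L) / 2 * (2 * measure M T) = m * measure M T - L * measure M T" by (simp add: field_simps)
        have e2: "s * (\<integral>x\<in>C. X x \<partial>M) = s * (\<integral>x\<in>A'. X x \<partial>M) + s * (\<integral>x\<in>T. X x \<partial>M)"
          using IC by (simp add: algebra_simps)
        have e3: "- L * measure M A' = - (L * measure M A')" by simp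
        show ?thesis using p1 p2 I1 I2 e1 e2 e3 by linarith
      qed
      then have sa: "(m - L) / 2 \<le> s * a" unfolding a_def using Cpos
        by (simp add: pos_le_divide_eq)
      have "AE w in M. w \<notin> A'"
        using ce dom0[OF Q] AE_space
      proof eventually_elim
        case (elim w)
        show "w \<notin> A'"
        proof
          assume wA': "w \<in> A'"
          then have wC: "w \<in> C" unfolding C_def by auto
          have wA: "\<bar>X w\<bar> \<le> L" "Y0 w < real K" using wA' A'A unfolding A_def by auto
          have E: "cond_exp_part M Q X w = a" using elim(1) wC by auto
          have "s * (a - X w) \<le> \<bar>a - X w\<bar>" using s by auto
          moreover have "s * X w \<le> L" using wA(1) s by auto
          moreover have "s * (a - X w) = s * a - s * X w" by (simp add: algebra_simps)
          moreover have "(m - L) / 2 = real K + L + 1" unfolding m_def by (simp add: field_simps)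
          ultimately have "\<bar>a - X w\<bar> \<ge> real K + 1" using sa by linarith
          then show False using elim(2) E wA(2) by auto
        qed
      qed
      then have "measure M A' = 0" using null_of_AE_notin[OF A'm] by blast
      then show False using A'pos by simp
    qed
    then have "AE w in M. w \<notin> A" using Am by (intro AE_not_in) (auto simp: emeasure_eq_measure)
    then show ?thesis using AE_space by eventually_elim (auto simp: A_def S_def)
  qed
  have "AE w in M. \<forall>K::nat. w \<in> S \<longrightarrow> real K \<le> Y0 w"
    by (subst AE_all_countable) (rule allI, rule main)
  then have "AE w in M. w \<notin> S"
  proof eventually_elim
    case (elim w)
    obtain K where "Y0 w < real K" using reals_Archimedean2 by blast
    then show ?case using elim[rule_format, of K] by auto
  qed
  then have "measure M S = 0" using null_of_AE_notin[OF Sm] by blast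
  then show False using SL unfolding S_def by simp
qed

theorem proposition3p3:
  fixes M :: "'a measure" and \<Phi> :: "real \<Rightarrow> real" and X :: "'a \<Rightarrow> real"
  assumes "prob_space M"
    and "nonatomic M"
    and "orlicz_fun \<Phi>"
    and "X \<in> LPhi M \<Phi>"
  shows "order_conv M \<Phi> (partitions M) part_refines (\<lambda>P. cond_exp_part M P X) X
           \<longleftrightarrow> X \<in> Linf M"
proof
  assume "order_conv M \<Phi> (partitions M) part_refines (\<lambda>P. cond_exp_part M P X) X"
  then show "X \<in> Linf M" using only_if_dir[OF assms(1-4)] by blast
next
  assume "X \<in> Linf M"
  then show "order_conv M \<Phi> (partitions M) part_refines (\<lambda>P. cond_exp_part M P X) X"
    using if_dir[OF assms(1) assms(3) assms(4)] by blast
qed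

end
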